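(* Each of the following six sets is a rational Diophantine sextuple, i.e. consists of six distinct positive rational numbers such that for any two distinct elements $x,y$ of the set, $xy+1$ is the square of a rational number: $$\left\{\tfrac{17}{448},\ \tfrac{265}{448},\ \tfrac{2145}{448},\ 252,\ \tfrac{23460}{7},\ \tfrac{2352}{7921}\right\},$$ $$\left\{\tfrac{9}{44},\ \tfrac{91}{132},\ \tfrac{60}{11},\ \tfrac{44}{3},\ \tfrac{1265}{12},\ \tfrac{4420}{3993}\right\},$$ $$\left\{\tfrac{3}{80},\ \tfrac{55}{16},\ \tfrac{28}{5},\ \tfrac{1683}{80},\ 1680,\ \tfrac{2220}{6889}\right\},$$ $$\left\{\tfrac{47}{60},\ \tfrac{287}{240},\ \tfrac{225}{64},\ \tfrac{1463}{60},\ \tfrac{512}{15},\ \tfrac{225}{1156}\right\},$$ $$\left\{\tfrac{27}{1856},\ \tfrac{2065}{5568},\ \tfrac{116}{3},\ \tfrac{23693}{192},\ \tfrac{12880}{87},\ \tfrac{21420}{229709}\right\},$$ $$\left\{\tfrac{21}{352},\ \tfrac{237}{352},\ \tfrac{280}{33},\ \tfrac{1573}{96},\ \tfrac{4680}{11},\ \tfrac{398090}{236883}\right\}.$$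
   Context: A rational Diophantine $m$-tuple is a set of $m$ distinct positive rational numbers such that the product of any two distinct elements, plus $1$, is the square of a rational number. A sextuple is the case $m=6$. *)

theory Defs
  imports Complex_Main
begin

definition rational_diophantine_tuple :: "nat \<Rightarrow> rat set \<Rightarrow> bool" where
  "rational_diophantine_tuple m S \<longleftrightarrow>
     finite S \<and> card S = m \<and> (\<forall>x\<in>S. x > 0) \<and>
     (\<forall>x\<in>S. \<forall>y\<in>S. x \<noteq> y \<longrightarrow> (\<exists>r::rat. x * y + 1 = r ^ 2))"

abbreviation rational_diophantine_sextuple :: "rat set \<Rightarrow> bool" where
  "rational_diophantine_sextuple S \<equiv> rational_diophantine_tuple 6 S"

end

theory Submission
  imports Defs
begin

lemma set0: "rational_diophantine_sextuple ({17/448, 265/448, 2145/448, 252, 23460/7, 2352/7921} :: rat set)"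
proof -
  have h0: "\<exists>r::rat. (17/448::rat) * (265/448) + 1 = r ^ 2 \<and> (265/448::rat) * (17/448) + 1 = r ^ 2" by (rule exI[of _ "(453/448::rat)"]) (simp add: power2_eq_square)
  have h1: "\<exists>r::rat. (17/448::rat) * (2145/448) + 1 = r ^ 2 \<and> (2145/448::rat) * (17/448) + 1 = r ^ 2" by (rule exI[of _ "(487/448::rat)"]) (simp add: power2_eq_square)
  have h2: "\<exists>r::rat. (17/448::rat) * (252) + 1 = r ^ 2 \<and> (252::rat) * (17/448) + 1 = r ^ 2" by (rule exI[of _ "(13/4::rat)"]) (simp add: power2_eq_square)
  have h3: "\<exists>r::rat. (17/448::rat) * (23460/7) + 1 = r ^ 2 \<and> (23460/7::rat) * (17/448) + 1 = r ^ 2" by (rule exI[of _ "(317/28::rat)"]) (simp add: power2_eq_square)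
  have h4: "\<exists>r::rat. (17/448::rat) * (2352/7921) + 1 = r ^ 2 \<and> (2352/7921::rat) * (17/448) + 1 = r ^ 2" by (rule exI[of _ "(179/178::rat)"]) (simp add: power2_eq_square)
  have h5: "\<exists>r::rat. (265/448::rat) * (2145/448) + 1 = r ^ 2 \<and> (2145/448::rat) * (265/448) + 1 = r ^ 2" by (rule exI[of _ "(877/448::rat)"]) (simp add: power2_eq_square)
  have h6: "\<exists>r::rat. (265/448::rat) * (252) + 1 = r ^ 2 \<and> (252::rat) * (265/448) + 1 = r ^ 2" by (rule exI[of _ "(49/4::rat)"]) (simp add: power2_eq_square)
  have h7: "\<exists>r::rat. (265/448::rat) * (23460/7) + 1 = r ^ 2 \<and> (23460/7::rat) * (265/448) + 1 = r ^ 2" by (rule exI[of _ "(1247/28::rat)"]) (simp add: power2_eq_square)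
  have h8: "\<exists>r::rat. (265/448::rat) * (2352/7921) + 1 = r ^ 2 \<and> (2352/7921::rat) * (265/448) + 1 = r ^ 2" by (rule exI[of _ "(193/178::rat)"]) (simp add: power2_eq_square)
  have h9: "\<exists>r::rat. (2145/448::rat) * (252) + 1 = r ^ 2 \<and> (252::rat) * (2145/448) + 1 = r ^ 2" by (rule exI[of _ "(139/4::rat)"]) (simp add: power2_eq_square)
  have h10: "\<exists>r::rat. (2145/448::rat) * (23460/7) + 1 = r ^ 2 \<and> (23460/7::rat) * (2145/448) + 1 = r ^ 2" by (rule exI[of _ "(3547/28::rat)"]) (simp add: power2_eq_square)
  have h11: "\<exists>r::rat. (2145/448::rat) * (2352/7921) + 1 = r ^ 2 \<and> (2352/7921::rat) * (2145/448) + 1 = r ^ 2" by (rule exI[of _ "(277/178::rat)"]) (simp add: power2_eq_square)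
  have h12: "\<exists>r::rat. (252::rat) * (23460/7) + 1 = r ^ 2 \<and> (23460/7::rat) * (252) + 1 = r ^ 2" by (rule exI[of _ "(919/1::rat)"]) (simp add: power2_eq_square)
  have h13: "\<exists>r::rat. (252::rat) * (2352/7921) + 1 = r ^ 2 \<and> (2352/7921::rat) * (252) + 1 = r ^ 2" by (rule exI[of _ "(775/89::rat)"]) (simp add: power2_eq_square)
  have h14: "\<exists>r::rat. (23460/7::rat) * (2352/7921) + 1 = r ^ 2 \<and> (2352/7921::rat) * (23460/7) + 1 = r ^ 2" by (rule exI[of _ "(2809/89::rat)"]) (simp add: power2_eq_square)
  show ?thesis unfolding rational_diophantine_tuple_def using h0 h1 h2 h3 h4 h5 h6 h7 h8 h9 h10 h11 h12 h13 h14 by simp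
qed

lemma set1: "rational_diophantine_sextuple ({9/44, 91/132, 60/11, 44/3, 1265/12, 4420/3993} :: rat set)"
proof -
  have h0: "\<exists>r::rat. (9/44::rat) * (91/132) + 1 = r ^ 2 \<and> (91/132::rat) * (9/44) + 1 = r ^ 2" by (rule exI[of _ "(47/44::rat)"]) (simp add: power2_eq_square)
  have h1: "\<exists>r::rat. (9/44::rat) * (60/11) + 1 = r ^ 2 \<and> (60/11::rat) * (9/44) + 1 = r ^ 2" by (rule exI[of _ "(16/11::rat)"]) (simp add: power2_eq_square)
  have h2: "\<exists>r::rat. (9/44::rat) * (44/3) + 1 = r ^ 2 \<and> (44/3::rat) * (9/44) + 1 = r ^ 2" by (rule exI[of _ "(2/1::rat)"]) (simp add: power2_eq_square)
  have h3: "\<exists>r::rat. (9/44::rat) * (1265/12) + 1 = r ^ 2 \<and> (1265/12::rat) * (9/44) + 1 = r ^ 2" by (rule exI[of _ "(19/4::rat)"]) (simp add: power2_eq_square)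
  have h4: "\<exists>r::rat. (9/44::rat) * (4420/3993) + 1 = r ^ 2 \<and> (4420/3993::rat) * (9/44) + 1 = r ^ 2" by (rule exI[of _ "(134/121::rat)"]) (simp add: power2_eq_square)
  have h5: "\<exists>r::rat. (91/132::rat) * (60/11) + 1 = r ^ 2 \<and> (60/11::rat) * (91/132) + 1 = r ^ 2" by (rule exI[of _ "(24/11::rat)"]) (simp add: power2_eq_square)
  have h6: "\<exists>r::rat. (91/132::rat) * (44/3) + 1 = r ^ 2 \<and> (44/3::rat) * (91/132) + 1 = r ^ 2" by (rule exI[of _ "(10/3::rat)"]) (simp add: power2_eq_square)
  have h7: "\<exists>r::rat. (91/132::rat) * (1265/12) + 1 = r ^ 2 \<and> (1265/12::rat) * (91/132) + 1 = r ^ 2" by (rule exI[of _ "(103/12::rat)"]) (simp add: power2_eq_square)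
  have h8: "\<exists>r::rat. (91/132::rat) * (4420/3993) + 1 = r ^ 2 \<and> (4420/3993::rat) * (91/132) + 1 = r ^ 2" by (rule exI[of _ "(482/363::rat)"]) (simp add: power2_eq_square)
  have h9: "\<exists>r::rat. (60/11::rat) * (44/3) + 1 = r ^ 2 \<and> (44/3::rat) * (60/11) + 1 = r ^ 2" by (rule exI[of _ "(9/1::rat)"]) (simp add: power2_eq_square)
  have h10: "\<exists>r::rat. (60/11::rat) * (1265/12) + 1 = r ^ 2 \<and> (1265/12::rat) * (60/11) + 1 = r ^ 2" by (rule exI[of _ "(24/1::rat)"]) (simp add: power2_eq_square)
  have h11: "\<exists>r::rat. (60/11::rat) * (4420/3993) + 1 = r ^ 2 \<and> (4420/3993::rat) * (60/11) + 1 = r ^ 2" by (rule exI[of _ "(321/121::rat)"]) (simp add: power2_eq_square)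
  have h12: "\<exists>r::rat. (44/3::rat) * (1265/12) + 1 = r ^ 2 \<and> (1265/12::rat) * (44/3) + 1 = r ^ 2" by (rule exI[of _ "(118/3::rat)"]) (simp add: power2_eq_square)
  have h13: "\<exists>r::rat. (44/3::rat) * (4420/3993) + 1 = r ^ 2 \<and> (4420/3993::rat) * (44/3) + 1 = r ^ 2" by (rule exI[of _ "(137/33::rat)"]) (simp add: power2_eq_square)
  have h14: "\<exists>r::rat. (1265/12::rat) * (4420/3993) + 1 = r ^ 2 \<and> (4420/3993::rat) * (1265/12) + 1 = r ^ 2" by (rule exI[of _ "(358/33::rat)"]) (simp add: power2_eq_square)
  show ?thesis unfolding rational_diophantine_tuple_def using h0 h1 h2 h3 h4 h5 h6 h7 h8 h9 h10 h11 h12 h13 h14 by simp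
qed

lemma set2: "rational_diophantine_sextuple ({3/80, 55/16, 28/5, 1683/80, 1680, 2220/6889} :: rat set)"
proof -
  have h0: "\<exists>r::rat. (3/80::rat) * (55/16) + 1 = r ^ 2 \<and> (55/16::rat) * (3/80) + 1 = r ^ 2" by (rule exI[of _ "(17/16::rat)"]) (simp add: power2_eq_square)
  have h1: "\<exists>r::rat. (3/80::rat) * (28/5) + 1 = r ^ 2 \<and> (28/5::rat) * (3/80) + 1 = r ^ 2" by (rule exI[of _ "(11/10::rat)"]) (simp add: power2_eq_square)
  have h2: "\<exists>r::rat. (3/80::rat) * (1683/80) + 1 = r ^ 2 \<and> (1683/80::rat) * (3/80) + 1 = r ^ 2" by (rule exI[of _ "(107/80::rat)"]) (simp add: power2_eq_square)
  have h3: "\<exists>r::rat. (3/80::rat) * (1680) + 1 = r ^ 2 \<and> (1680::rat) * (3/80) + 1 = r ^ 2" by (rule exI[of _ "(8/1::rat)"]) (simp add: power2_eq_square)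
  have h4: "\<exists>r::rat. (3/80::rat) * (2220/6889) + 1 = r ^ 2 \<and> (2220/6889::rat) * (3/80) + 1 = r ^ 2" by (rule exI[of _ "(167/166::rat)"]) (simp add: power2_eq_square)
  have h5: "\<exists>r::rat. (55/16::rat) * (28/5) + 1 = r ^ 2 \<and> (28/5::rat) * (55/16) + 1 = r ^ 2" by (rule exI[of _ "(9/2::rat)"]) (simp add: power2_eq_square)
  have h6: "\<exists>r::rat. (55/16::rat) * (1683/80) + 1 = r ^ 2 \<and> (1683/80::rat) * (55/16) + 1 = r ^ 2" by (rule exI[of _ "(137/16::rat)"]) (simp add: power2_eq_square)
  have h7: "\<exists>r::rat. (55/16::rat) * (1680) + 1 = r ^ 2 \<and> (1680::rat) * (55/16) + 1 = r ^ 2" by (rule exI[of _ "(76/1::rat)"]) (simp add: power2_eq_square)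
  have h8: "\<exists>r::rat. (55/16::rat) * (2220/6889) + 1 = r ^ 2 \<and> (2220/6889::rat) * (55/16) + 1 = r ^ 2" by (rule exI[of _ "(241/166::rat)"]) (simp add: power2_eq_square)
  have h9: "\<exists>r::rat. (28/5::rat) * (1683/80) + 1 = r ^ 2 \<and> (1683/80::rat) * (28/5) + 1 = r ^ 2" by (rule exI[of _ "(109/10::rat)"]) (simp add: power2_eq_square)
  have h10: "\<exists>r::rat. (28/5::rat) * (1680) + 1 = r ^ 2 \<and> (1680::rat) * (28/5) + 1 = r ^ 2" by (rule exI[of _ "(97/1::rat)"]) (simp add: power2_eq_square)
  have h11: "\<exists>r::rat. (28/5::rat) * (2220/6889) + 1 = r ^ 2 \<and> (2220/6889::rat) * (28/5) + 1 = r ^ 2" by (rule exI[of _ "(139/83::rat)"]) (simp add: power2_eq_square)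
  have h12: "\<exists>r::rat. (1683/80::rat) * (1680) + 1 = r ^ 2 \<and> (1680::rat) * (1683/80) + 1 = r ^ 2" by (rule exI[of _ "(188/1::rat)"]) (simp add: power2_eq_square)
  have h13: "\<exists>r::rat. (1683/80::rat) * (2220/6889) + 1 = r ^ 2 \<and> (2220/6889::rat) * (1683/80) + 1 = r ^ 2" by (rule exI[of _ "(463/166::rat)"]) (simp add: power2_eq_square)
  have h14: "\<exists>r::rat. (1680::rat) * (2220/6889) + 1 = r ^ 2 \<and> (2220/6889::rat) * (1680) + 1 = r ^ 2" by (rule exI[of _ "(1933/83::rat)"]) (simp add: power2_eq_square)
  show ?thesis unfolding rational_diophantine_tuple_def using h0 h1 h2 h3 h4 h5 h6 h7 h8 h9 h10 h11 h12 h13 h14 by simp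
qed

lemma set3: "rational_diophantine_sextuple ({47/60, 287/240, 225/64, 1463/60, 512/15, 225/1156} :: rat set)"
proof -
  have h0: "\<exists>r::rat. (47/60::rat) * (287/240) + 1 = r ^ 2 \<and> (287/240::rat) * (47/60) + 1 = r ^ 2" by (rule exI[of _ "(167/120::rat)"]) (simp add: power2_eq_square)
  have h1: "\<exists>r::rat. (47/60::rat) * (225/64) + 1 = r ^ 2 \<and> (225/64::rat) * (47/60) + 1 = r ^ 2" by (rule exI[of _ "(31/16::rat)"]) (simp add: power2_eq_square)
  have h2: "\<exists>r::rat. (47/60::rat) * (1463/60) + 1 = r ^ 2 \<and> (1463/60::rat) * (47/60) + 1 = r ^ 2" by (rule exI[of _ "(269/60::rat)"]) (simp add: power2_eq_square)
  have h3: "\<exists>r::rat. (47/60::rat) * (512/15) + 1 = r ^ 2 \<and> (512/15::rat) * (47/60) + 1 = r ^ 2" by (rule exI[of _ "(79/15::rat)"]) (simp add: power2_eq_square)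
  have h4: "\<exists>r::rat. (47/60::rat) * (225/1156) + 1 = r ^ 2 \<and> (225/1156::rat) * (47/60) + 1 = r ^ 2" by (rule exI[of _ "(73/68::rat)"]) (simp add: power2_eq_square)
  have h5: "\<exists>r::rat. (287/240::rat) * (225/64) + 1 = r ^ 2 \<and> (225/64::rat) * (287/240) + 1 = r ^ 2" by (rule exI[of _ "(73/32::rat)"]) (simp add: power2_eq_square)
  have h6: "\<exists>r::rat. (287/240::rat) * (1463/60) + 1 = r ^ 2 \<and> (1463/60::rat) * (287/240) + 1 = r ^ 2" by (rule exI[of _ "(659/120::rat)"]) (simp add: power2_eq_square)
  have h7: "\<exists>r::rat. (287/240::rat) * (512/15) + 1 = r ^ 2 \<and> (512/15::rat) * (287/240) + 1 = r ^ 2" by (rule exI[of _ "(97/15::rat)"]) (simp add: power2_eq_square)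
  have h8: "\<exists>r::rat. (287/240::rat) * (225/1156) + 1 = r ^ 2 \<and> (225/1156::rat) * (287/240) + 1 = r ^ 2" by (rule exI[of _ "(151/136::rat)"]) (simp add: power2_eq_square)
  have h9: "\<exists>r::rat. (225/64::rat) * (1463/60) + 1 = r ^ 2 \<and> (1463/60::rat) * (225/64) + 1 = r ^ 2" by (rule exI[of _ "(149/16::rat)"]) (simp add: power2_eq_square)
  have h10: "\<exists>r::rat. (225/64::rat) * (512/15) + 1 = r ^ 2 \<and> (512/15::rat) * (225/64) + 1 = r ^ 2" by (rule exI[of _ "(11/1::rat)"]) (simp add: power2_eq_square)
  have h11: "\<exists>r::rat. (225/64::rat) * (225/1156) + 1 = r ^ 2 \<and> (225/1156::rat) * (225/64) + 1 = r ^ 2" by (rule exI[of _ "(353/272::rat)"]) (simp add: power2_eq_square)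
  have h12: "\<exists>r::rat. (1463/60::rat) * (512/15) + 1 = r ^ 2 \<and> (512/15::rat) * (1463/60) + 1 = r ^ 2" by (rule exI[of _ "(433/15::rat)"]) (simp add: power2_eq_square)
  have h13: "\<exists>r::rat. (1463/60::rat) * (225/1156) + 1 = r ^ 2 \<and> (225/1156::rat) * (1463/60) + 1 = r ^ 2" by (rule exI[of _ "(163/68::rat)"]) (simp add: power2_eq_square)
  have h14: "\<exists>r::rat. (512/15::rat) * (225/1156) + 1 = r ^ 2 \<and> (225/1156::rat) * (512/15) + 1 = r ^ 2" by (rule exI[of _ "(47/17::rat)"]) (simp add: power2_eq_square)
  show ?thesis unfolding rational_diophantine_tuple_def using h0 h1 h2 h3 h4 h5 h6 h7 h8 h9 h10 h11 h12 h13 h14 by simp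
qed

lemma set4: "rational_diophantine_sextuple ({27/1856, 2065/5568, 116/3, 23693/192, 12880/87, 21420/229709} :: rat set)"
proof -
  have h0: "\<exists>r::rat. (27/1856::rat) * (2065/5568) + 1 = r ^ 2 \<and> (2065/5568::rat) * (27/1856) + 1 = r ^ 2" by (rule exI[of _ "(1861/1856::rat)"]) (simp add: power2_eq_square)
  have h1: "\<exists>r::rat. (27/1856::rat) * (116/3) + 1 = r ^ 2 \<and> (116/3::rat) * (27/1856) + 1 = r ^ 2" by (rule exI[of _ "(5/4::rat)"]) (simp add: power2_eq_square)
  have h2: "\<exists>r::rat. (27/1856::rat) * (23693/192) + 1 = r ^ 2 \<and> (23693/192::rat) * (27/1856) + 1 = r ^ 2" by (rule exI[of _ "(107/64::rat)"]) (simp add: power2_eq_square)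
  have h3: "\<exists>r::rat. (27/1856::rat) * (12880/87) + 1 = r ^ 2 \<and> (12880/87::rat) * (27/1856) + 1 = r ^ 2" by (rule exI[of _ "(103/58::rat)"]) (simp add: power2_eq_square)
  have h4: "\<exists>r::rat. (27/1856::rat) * (21420/229709) + 1 = r ^ 2 \<and> (21420/229709::rat) * (27/1856) + 1 = r ^ 2" by (rule exI[of _ "(10331/10324::rat)"]) (simp add: power2_eq_square)
  have h5: "\<exists>r::rat. (2065/5568::rat) * (116/3) + 1 = r ^ 2 \<and> (116/3::rat) * (2065/5568) + 1 = r ^ 2" by (rule exI[of _ "(47/12::rat)"]) (simp add: power2_eq_square)
  have h6: "\<exists>r::rat. (2065/5568::rat) * (23693/192) + 1 = r ^ 2 \<and> (23693/192::rat) * (2065/5568) + 1 = r ^ 2" by (rule exI[of _ "(1313/192::rat)"]) (simp add: power2_eq_square)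
  have h7: "\<exists>r::rat. (2065/5568::rat) * (12880/87) + 1 = r ^ 2 \<and> (12880/87::rat) * (2065/5568) + 1 = r ^ 2" by (rule exI[of _ "(1301/174::rat)"]) (simp add: power2_eq_square)
  have h8: "\<exists>r::rat. (2065/5568::rat) * (21420/229709) + 1 = r ^ 2 \<and> (21420/229709::rat) * (2065/5568) + 1 = r ^ 2" by (rule exI[of _ "(10501/10324::rat)"]) (simp add: power2_eq_square)
  have h9: "\<exists>r::rat. (116/3::rat) * (23693/192) + 1 = r ^ 2 \<and> (23693/192::rat) * (116/3) + 1 = r ^ 2" by (rule exI[of _ "(829/12::rat)"]) (simp add: power2_eq_square)
  have h10: "\<exists>r::rat. (116/3::rat) * (12880/87) + 1 = r ^ 2 \<and> (12880/87::rat) * (116/3) + 1 = r ^ 2" by (rule exI[of _ "(227/3::rat)"]) (simp add: power2_eq_square)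
  have h11: "\<exists>r::rat. (116/3::rat) * (21420/229709) + 1 = r ^ 2 \<and> (21420/229709::rat) * (116/3) + 1 = r ^ 2" by (rule exI[of _ "(191/89::rat)"]) (simp add: power2_eq_square)
  have h12: "\<exists>r::rat. (23693/192::rat) * (12880/87) + 1 = r ^ 2 \<and> (12880/87::rat) * (23693/192) + 1 = r ^ 2" by (rule exI[of _ "(811/6::rat)"]) (simp add: power2_eq_square)
  have h13: "\<exists>r::rat. (23693/192::rat) * (21420/229709) + 1 = r ^ 2 \<and> (21420/229709::rat) * (23693/192) + 1 = r ^ 2" by (rule exI[of _ "(1259/356::rat)"]) (simp add: power2_eq_square)
  have h14: "\<exists>r::rat. (12880/87::rat) * (21420/229709) + 1 = r ^ 2 \<and> (21420/229709::rat) * (12880/87) + 1 = r ^ 2" by (rule exI[of _ "(9931/2581::rat)"]) (simp add: power2_eq_square)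
  show ?thesis unfolding rational_diophantine_tuple_def using h0 h1 h2 h3 h4 h5 h6 h7 h8 h9 h10 h11 h12 h13 h14 by simp
qed

lemma set5: "rational_diophantine_sextuple ({21/352, 237/352, 280/33, 1573/96, 4680/11, 398090/236883} :: rat set)"
proof -
  have h0: "\<exists>r::rat. (21/352::rat) * (237/352) + 1 = r ^ 2 \<and> (237/352::rat) * (21/352) + 1 = r ^ 2" by (rule exI[of _ "(359/352::rat)"]) (simp add: power2_eq_square)
  have h1: "\<exists>r::rat. (21/352::rat) * (280/33) + 1 = r ^ 2 \<and> (280/33::rat) * (21/352) + 1 = r ^ 2" by (rule exI[of _ "(27/22::rat)"]) (simp add: power2_eq_square)
  have h2: "\<exists>r::rat. (21/352::rat) * (1573/96) + 1 = r ^ 2 \<and> (1573/96::rat) * (21/352) + 1 = r ^ 2" by (rule exI[of _ "(45/32::rat)"]) (simp add: power2_eq_square)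
  have h3: "\<exists>r::rat. (21/352::rat) * (4680/11) + 1 = r ^ 2 \<and> (4680/11::rat) * (21/352) + 1 = r ^ 2" by (rule exI[of _ "(113/22::rat)"]) (simp add: power2_eq_square)
  have h4: "\<exists>r::rat. (21/352::rat) * (398090/236883) + 1 = r ^ 2 \<and> (398090/236883::rat) * (21/352) + 1 = r ^ 2" by (rule exI[of _ "(1179/1124::rat)"]) (simp add: power2_eq_square)
  have h5: "\<exists>r::rat. (237/352::rat) * (280/33) + 1 = r ^ 2 \<and> (280/33::rat) * (237/352) + 1 = r ^ 2" by (rule exI[of _ "(57/22::rat)"]) (simp add: power2_eq_square)
  have h6: "\<exists>r::rat. (237/352::rat) * (1573/96) + 1 = r ^ 2 \<and> (1573/96::rat) * (237/352) + 1 = r ^ 2" by (rule exI[of _ "(111/32::rat)"]) (simp add: power2_eq_square)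
  have h7: "\<exists>r::rat. (237/352::rat) * (4680/11) + 1 = r ^ 2 \<and> (4680/11::rat) * (237/352) + 1 = r ^ 2" by (rule exI[of _ "(373/22::rat)"]) (simp add: power2_eq_square)
  have h8: "\<exists>r::rat. (237/352::rat) * (398090/236883) + 1 = r ^ 2 \<and> (398090/236883::rat) * (237/352) + 1 = r ^ 2" by (rule exI[of _ "(1641/1124::rat)"]) (simp add: power2_eq_square)
  have h9: "\<exists>r::rat. (280/33::rat) * (1573/96) + 1 = r ^ 2 \<and> (1573/96::rat) * (280/33) + 1 = r ^ 2" by (rule exI[of _ "(71/6::rat)"]) (simp add: power2_eq_square)
  have h10: "\<exists>r::rat. (280/33::rat) * (4680/11) + 1 = r ^ 2 \<and> (4680/11::rat) * (280/33) + 1 = r ^ 2" by (rule exI[of _ "(661/11::rat)"]) (simp add: power2_eq_square)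
  have h11: "\<exists>r::rat. (280/33::rat) * (398090/236883) + 1 = r ^ 2 \<and> (398090/236883::rat) * (280/33) + 1 = r ^ 2" by (rule exI[of _ "(3293/843::rat)"]) (simp add: power2_eq_square)
  have h12: "\<exists>r::rat. (1573/96::rat) * (4680/11) + 1 = r ^ 2 \<and> (4680/11::rat) * (1573/96) + 1 = r ^ 2" by (rule exI[of _ "(167/2::rat)"]) (simp add: power2_eq_square)
  have h13: "\<exists>r::rat. (1573/96::rat) * (398090/236883) + 1 = r ^ 2 \<and> (398090/236883::rat) * (1573/96) + 1 = r ^ 2" by (rule exI[of _ "(18013/3372::rat)"]) (simp add: power2_eq_square)
  have h14: "\<exists>r::rat. (4680/11::rat) * (398090/236883) + 1 = r ^ 2 \<and> (398090/236883::rat) * (4680/11) + 1 = r ^ 2" by (rule exI[of _ "(7519/281::rat)"]) (simp add: power2_eq_square)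
  show ?thesis unfolding rational_diophantine_tuple_def using h0 h1 h2 h3 h4 h5 h6 h7 h8 h9 h10 h11 h12 h13 h14 by simp
qed

theorem mainTheorem2:
  shows "rational_diophantine_sextuple {17/448, 265/448, 2145/448, 252, 23460/7, 2352/7921}
       \<and> rational_diophantine_sextuple {9/44, 91/132, 60/11, 44/3, 1265/12, 4420/3993}
       \<and> rational_diophantine_sextuple {3/80, 55/16, 28/5, 1683/80, 1680, 2220/6889}
       \<and> rational_diophantine_sextuple {47/60, 287/240, 225/64, 1463/60, 512/15, 225/1156}
       \<and> rational_diophantine_sextuple {27/1856, 2065/5568, 116/3, 23693/192, 12880/87, 21420/229709}
       \<and> rational_diophantine_sextuple {21/352, 237/352, 280/33, 1573/96, 4680/11, 398090/236883}"
  using set0 set1 set2 set3 set4 set5 by blast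

end
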